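(* ($q$-Seidel formula) Let $q\neq-1$ be real and $n\ge1$. Then $$\sum_{k=0}^{\lfloor n/2\rfloor}q^{\binom{2k}{2}}\begin{bmatrix} n\\ 2k\end{bmatrix}(-1)^k\frac{(-q^{n-2k+1};q)_{2k}}{(-q^{2n-2k};q)_{2k}}\,G_{2n-2k}(q)=[n=1].$$
   Context: Notation: $[m]=1+q+\cdots+q^{m-1}$, $[m]!=[1]\cdots[m]$, $\begin{bmatrix} m\\ j\end{bmatrix}=\frac{[m]!}{[j]![m-j]!}$; $(a;q)_m=(1-a)(1-aq)\cdots(1-aq^{m-1})$ (so $(-a;q)_m=(1+a)(1+aq)\cdots(1+aq^{m-1})$, and $(a;q)_0=1$); $[P]$ is $1$ if $P$ holds and $0$ otherwise. With $e(z)=\sum_{m\ge0}z^m/[m]!$, the $q$-Genocchi numbers $G_{2m}(q)$, $m\ge1$, are defined by the formal power series identity $z\frac{e(z)-e(-z)}{e(z)+e(-z)}=\sum_{m\ge1}\frac{(-1)^{m-1}G_{2m}(q)(-q;q)_{2m-1}}{[2m]!}z^{2m}$. *)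

theory Defs
  imports "HOL-Computational_Algebra.Formal_Power_Series"
begin

definition qint :: "real \<Rightarrow> nat \<Rightarrow> real" where
  "qint q m = (\<Sum>i<m. q ^ i)"

definition qfact :: "real \<Rightarrow> nat \<Rightarrow> real" where
  "qfact q m = (\<Prod>i\<in>{1..m}. qint q i)"

definition qbinom :: "real \<Rightarrow> nat \<Rightarrow> nat \<Rightarrow> real" where
  "qbinom q m j = qfact q m / (qfact q j * qfact q (m - j))"

definition qpoch :: "real \<Rightarrow> real \<Rightarrow> nat \<Rightarrow> real" where
  "qpoch a q m = (\<Prod>i<m. 1 - a * q ^ i)"

definition qexp :: "real \<Rightarrow> real fps" where
  "qexp q = Abs_fps (\<lambda>m. 1 / qfact q m)"

definition qexp_neg :: "real \<Rightarrow> real fps" where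
  "qexp_neg q = Abs_fps (\<lambda>m. (-1) ^ m / qfact q m)"

definition qgen_series :: "real \<Rightarrow> real fps" where
  "qgen_series q = fps_X * (qexp q - qexp_neg q) / (qexp q + qexp_neg q)"

text \<open>q-Genocchi number: qGenocchi q m = G_{2m}(q), m \<ge> 1, determined by
  comparing the coefficient of z^(2m) in the defining identity
  z (e(z)-e(-z))/(e(z)+e(-z)) = sum_m (-1)^(m-1) G_{2m}(q) (-q;q)_{2m-1} z^(2m)/[2m]!.\<close>
definition qGenocchi :: "real \<Rightarrow> nat \<Rightarrow> real" where
  "qGenocchi q m =
     fps_nth (qgen_series q) (2 * m) * qfact q (2 * m) * (-1) ^ (m - 1)
       / qpoch (- q) q (2 * m - 1)"

end

theory Submission
  imports Defs "HOL-Computational_Algebra.Polynomial"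
begin
lemma qint_Suc: "qint q (Suc m) = qint q m + q ^ m"
  by (simp add: qint_def)

lemma qfact_Suc: "qfact q (Suc m) = qfact q m * qint q (Suc m)"
  by (simp add: qfact_def atLeastAtMostSuc_conv mult.commute)

lemma qfact_0 [simp]: "qfact q 0 = 1" by (simp add: qfact_def)
lemma qint_0 [simp]: "qint q 0 = 0" by (simp add: qint_def)

lemma qint_split: "j \<le> m \<Longrightarrow> qint q m = qint q j + q ^ j * qint q (m - j)"
proof (induction m)
  case 0 then show ?case by simp
next
  case (Suc m)
  show ?case
  proof (cases "j = Suc m")
    case True then show ?thesis by simp
  next
    case False
    then have "j \<le> m" using Suc by simp
    then have "Suc m - j = Suc (m - j)" by simp
    then show ?thesis using Suc.IH[OF \<open>j \<le> m\<close>] \<open>j \<le> m\<close>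
      by (simp add: qint_Suc algebra_simps power_add[symmetric])
  qed
qed

lemma qint_nz: assumes "q \<noteq> -1" "m \<ge> 1" shows "qint q m \<noteq> 0"
proof (cases "q = 1")
  case True then show ?thesis using assms by (simp add: qint_def)
next
  case False
  have "qint q m * (1 - q) = 1 - q ^ m"
    unfolding qint_def by (simp add: one_diff_power_eq mult.commute)
  moreover have "q ^ m \<noteq> 1"
  proof
    assume "q ^ m = 1"
    then have "\<bar>q\<bar> ^ m = 1" by (metis power_abs abs_one)
    then have "\<bar>q\<bar> = 1" using assms(2) by (metis abs_ge_zero power_eq_imp_eq_base power_one zero_le_one not_one_le_zero le_neq_implies_less less_one not_gr0)
    then show False using assms(1) False by (auto simp: abs_if split: if_splits)
  qed
  ultimately show ?thesis using False by auto
qed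

lemma qfact_nz: "q \<noteq> -1 \<Longrightarrow> qfact q m \<noteq> 0"
  by (induction m) (auto simp: qfact_Suc qint_nz)

definition Qb :: "real \<Rightarrow> nat \<Rightarrow> nat \<Rightarrow> real" where
  "Qb q n j = (if j \<le> n then qbinom q n j else 0)"

lemma Qb_0 [simp]: "q \<noteq> -1 \<Longrightarrow> Qb q n 0 = 1"
  by (simp add: Qb_def qbinom_def qfact_nz)

lemma Qb_gt [simp]: "n < j \<Longrightarrow> Qb q n j = 0"
  by (simp add: Qb_def)

lemma Qb_pascal:
  assumes "q \<noteq> -1"
  shows "Qb q (Suc n) (Suc j) = Qb q n j + q ^ Suc j * Qb q n (Suc j)"
proof (cases "Suc j \<le> Suc n")
  case False then show ?thesis by simp
next
  case True
  then have jn: "j \<le> n" by simp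
  note nz = qfact_nz[OF assms]
  show ?thesis
  proof (cases "j = n")
    case True
    then show ?thesis using nz by (simp add: Qb_def qbinom_def)
  next
    case False
    then have jn': "Suc j \<le> n" using jn by simp
    have e1: "n - j = Suc (n - Suc j)" using jn' by simp
    have e2: "Suc n - Suc j = n - j" by simp
    have sp: "qint q (Suc n) = qint q (Suc j) + q ^ Suc j * qint q (n - j)"
      using qint_split[of "Suc j" "Suc n" q] jn by simp
    have "Qb q n j + q ^ Suc j * Qb q n (Suc j)
       = qfact q n / (qfact q j * qfact q (n - j)) + q ^ Suc j * (qfact q n / (qfact q (Suc j) * qfact q (n - Suc j)))"
      using jn jn' by (simp add: Qb_def qbinom_def)
    also have "\<dots> = qfact q n * (qint q (Suc j) + q ^ Suc j * qint q (n - j)) / (qfact q (Suc j) * qfact q (n - j))"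
      using nz[of j] nz[of "n - Suc j"] qint_nz[OF assms, of "Suc j"] qint_nz[OF assms, of "n - j"] jn'
      unfolding e1 qfact_Suc by (simp add: field_simps)
    also have "\<dots> = Qb q (Suc n) (Suc j)"
      using True unfolding sp[symmetric] by (simp add: Qb_def qbinom_def qfact_Suc[of q n] e2 mult.commute)
    finally show ?thesis by simp
  qed
qed

lemma Qb_diag [simp]: "q \<noteq> -1 \<Longrightarrow> Qb q n n = 1"
  using qfact_nz[of q n] by (simp add: Qb_def qbinom_def)

definition Bop :: "real \<Rightarrow> real poly \<Rightarrow> real poly" where
  "Bop q p = pCons 0 p + pcompose p [:0, q:]"

lemma coeff_Bop: "coeff (Bop q p) i = (case i of 0 \<Rightarrow> 0 | Suc k \<Rightarrow> coeff p k) + q ^ i * coeff p i"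
  by (simp add: Bop_def coeff_pCons coeff_pcompose_linear)

lemma Bop_add: "Bop q (p + r) = Bop q p + Bop q r"
  by (rule poly_eqI) (simp add: coeff_Bop algebra_simps split: nat.split)

lemma Bop_smult: "Bop q (smult c p) = smult c (Bop q p)"
  by (rule poly_eqI) (simp add: coeff_Bop algebra_simps split: nat.split)

lemma Bop_sum: "Bop q (\<Sum>i\<in>A. f i) = (\<Sum>i\<in>A. Bop q (f i))"
  by (rule poly_eqI) (simp add: coeff_Bop coeff_sum sum_distrib_left sum.distrib split: nat.split)

lemma coeff_Bpow: "q \<noteq> -1 \<Longrightarrow> coeff ((Bop q ^^ i) 1) l = Qb q i l"
proof (induction i arbitrary: l)
  case 0 then show ?case by (cases l) (auto simp: coeff_1)
next
  case (Suc i)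
  show ?case
  proof (cases l)
    case 0 then show ?thesis using Suc by (simp add: coeff_Bop)
  next
    case (Suc k) then show ?thesis using Suc.IH Suc.prems by (simp add: coeff_Bop Qb_pascal)
  qed
qed

lemma sum_coeff_bound:
  fixes g :: "nat \<Rightarrow> 'a::zero \<Rightarrow> 'b::comm_monoid_add"
  assumes "degree f \<le> N" "\<And>i. g i 0 = 0"
  shows "(\<Sum>i\<le>N. g i (coeff f i)) = (\<Sum>i\<le>degree f. g i (coeff f i))"
  by (rule sum.mono_neutral_right) (use assms in \<open>auto simp: coeff_eq_0\<close>)

definition Eop :: "real \<Rightarrow> real poly \<Rightarrow> real poly" where
  "Eop q f = (\<Sum>i\<le>degree f. smult (coeff f i) ((Bop q ^^ i) 1))"

lemma Eop_bound: "degree f \<le> N \<Longrightarrow> Eop q f = (\<Sum>i\<le>N. smult (coeff f i) ((Bop q ^^ i) 1))"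
  unfolding Eop_def by (rule sum_coeff_bound[symmetric]) auto

lemma Eop_add: "Eop q (f + g) = Eop q f + Eop q g"
proof -
  define N where "N = max (degree f) (degree g)"
  have "degree (f + g) \<le> N" "degree f \<le> N" "degree g \<le> N"
    unfolding N_def by (auto intro: degree_add_le)
  then show ?thesis
    by (simp add: Eop_bound[of _ N] smult_add_left sum.distrib)
qed

lemma smult_sum_distrib: "smult c (\<Sum>i\<in>A. g i) = (\<Sum>i\<in>A. smult c (g i))"
  by (rule poly_eqI) (simp add: coeff_sum sum_distrib_left)

lemma Eop_smult: "Eop q (smult c f) = smult c (Eop q f)"
proof -
  have "degree (smult c f) \<le> degree f" by simp
  then show ?thesis
    by (simp add: Eop_bound[of _ "degree f"] smult_sum_distrib Eop_def smult_smult)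
qed

lemma Eop_pCons0: "Eop q (pCons 0 f) = Bop q (Eop q f)"
proof -
  have "degree (pCons 0 f) \<le> Suc (degree f)" by (simp add: degree_pCons_le)
  then have "Eop q (pCons 0 f) = (\<Sum>i\<le>Suc (degree f). smult (coeff (pCons 0 f) i) ((Bop q ^^ i) 1))"
    by (rule Eop_bound)
  also have "\<dots> = (\<Sum>i\<le>degree f. smult (coeff f i) ((Bop q ^^ Suc i) 1))"
    by (subst sum.atMost_Suc_shift) simp
  also have "\<dots> = Bop q (Eop q f)"
    by (simp add: Eop_def Bop_sum Bop_smult)
  finally show ?thesis .
qed

lemma Eop_const: "Eop q [:c:] = [:c:]"
  by (simp add: Eop_def)

lemma Eop_mult_lin: "Eop q (f * [:c, 1:]) = Bop q (Eop q f) + smult c (Eop q f)"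
proof -
  have "f * [:c, 1:] = smult c f + pCons 0 f"
    by (simp add: mult_pCons_right one_pCons[symmetric])
  then show ?thesis by (simp add: Eop_add Eop_smult Eop_pCons0)
qed

definition Fp :: "real \<Rightarrow> nat \<Rightarrow> real poly" where
  "Fp q n = (\<Prod>k<n. [:-(q ^ k), 1:])"
definition Gp :: "real \<Rightarrow> nat \<Rightarrow> real poly" where
  "Gp q i = (\<Prod>k<i. [:q ^ k, 1:])"

lemma Eop_Fp: "Eop q (Fp q n) = monom 1 n"
proof (induction n)
  case 0 then show ?case by (simp add: Fp_def Eop_const[of q 1, simplified] one_pCons)
next
  case (Suc n)
  have f: "Fp q (Suc n) = Fp q n * [:-(q ^ n), 1:]" by (simp add: Fp_def)
  have "Eop q (Fp q (Suc n)) = Bop q (Eop q (Fp q n)) + smult (-(q ^ n)) (Eop q (Fp q n))"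
    unfolding f by (rule Eop_mult_lin)
  also have "\<dots> = Bop q (monom 1 n) + smult (-(q ^ n)) (monom 1 n)" by (simp only: Suc.IH)
  also have "\<dots> = monom 1 (Suc n)"
    by (rule poly_eqI) (auto simp: coeff_Bop coeff_monom split: nat.split)
  finally show ?case .
qed

definition PP :: "real \<Rightarrow> nat \<Rightarrow> nat \<Rightarrow> real" where
  "PP q n d = (\<Prod>i<d. 1 + q ^ (n + 1 - d + i))"

lemma PP_0 [simp]: "PP q n 0 = 1" by (simp add: PP_def)

lemma PP_Suc: "d \<le> n \<Longrightarrow> PP q n (Suc d) = (1 + q ^ (n - d)) * PP q n d"
  unfolding PP_def by (subst prod.lessThan_Suc_shift) (simp add: Suc_diff_le)

lemma choose2_Suc: "Suc e choose 2 = (e choose 2) + e"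
  using binomial_Suc_Suc[of e 1] by (simp add: numeral_2_eq_2)

lemma choose2_0 [simp]: "(0::nat) choose 2 = 0"
  by (simp add: numeral_2_eq_2)

definition cf :: "real \<Rightarrow> nat \<Rightarrow> nat \<Rightarrow> nat \<Rightarrow> real" where
  "cf q n i j = (if j \<le> i then Qb q i j * q ^ ((i - j) choose 2) * PP q n (i - j) else 0)"

lemma cf_step:
  assumes q: "q \<noteq> -1" and "i < n"
  shows "cf q n (Suc i) j = (case j of 0 \<Rightarrow> 0 | Suc j' \<Rightarrow> cf q n i j') + (q ^ (n + j) + q ^ i) * cf q n i j"
proof (cases j)
  case 0
  have c: "Suc i choose 2 = (i choose 2) + i" by (rule choose2_Suc)
  have "q ^ i * (1 + q ^ (n - i)) = q ^ n + q ^ i" using assms(2)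
    by (simp add: algebra_simps power_add[symmetric])
  then show ?thesis using 0 assms
    by (simp add: cf_def PP_Suc c power_add algebra_simps)
next
  case (Suc j')
  show ?thesis
  proof (cases "i < j'")
    case True then show ?thesis using Suc by (simp add: cf_def)
  next
    case False
    show ?thesis
    proof (cases "j' = i")
      case True then show ?thesis using Suc q by (simp add: cf_def)
    next
      case False
      then obtain e where ie: "i = Suc j' + e" using \<open>\<not> i < j'\<close>
        by (metis add_Suc le_Suc_ex le_neq_implies_less not_less less_eq_Suc_le)
      obtain r where nr: "n = Suc j' + e + Suc r" using assms(2) ie
        by (metis add_Suc_right less_imp_Suc_add add.assoc)
      have c: "Suc e choose 2 = (e choose 2) + e" by (rule choose2_Suc)
      have pp: "PP q n (Suc e) = (1 + q ^ (Suc j' + Suc r)) * PP q n e"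
        using PP_Suc[of e n q] nr by simp
      have d1: "Suc i - Suc j' = Suc e" "i - j' = Suc e" "i - Suc j' = e" using ie by auto
      have "cf q n (Suc i) j = (Qb q i j' + q ^ Suc j' * Qb q i (Suc j')) * q ^ (Suc e choose 2) * PP q n (Suc e)"
        using Suc ie q by (simp add: cf_def Qb_pascal d1)
      also have "\<dots> = Qb q i j' * q ^ (Suc e choose 2) * PP q n (Suc e)
          + (q ^ (n + j) + q ^ i) * (Qb q i (Suc j') * q ^ (e choose 2) * PP q n e)"
        unfolding pp c using Suc nr ie by (simp add: algebra_simps power_add)
      also have "\<dots> = (case j of 0 \<Rightarrow> 0 | Suc j' \<Rightarrow> cf q n i j') + (q ^ (n + j) + q ^ i) * cf q n i j"
        using Suc ie by (simp add: cf_def d1)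
      finally show ?thesis .
    qed
  qed
qed

lemma coeff_Eop_FG:
  assumes q: "q \<noteq> -1"
  shows "i \<le> n \<Longrightarrow> coeff (Eop q (Fp q n * Gp q i)) m = (if n \<le> m then cf q n i (m - n) else 0)"
proof (induction i arbitrary: m)
  case 0 then show ?case using q by (auto simp: Gp_def Eop_Fp coeff_monom cf_def)
next
  case (Suc i)
  have f: "Fp q n * Gp q (Suc i) = (Fp q n * Gp q i) * [:q ^ i, 1:]" by (simp only: Gp_def prod.lessThan_Suc mult.assoc)
  have e: "coeff (Eop q (Fp q n * Gp q (Suc i))) m =
     (case m of 0 \<Rightarrow> 0 | Suc k \<Rightarrow> coeff (Eop q (Fp q n * Gp q i)) k) + q ^ m * coeff (Eop q (Fp q n * Gp q i)) m
     + q ^ i * coeff (Eop q (Fp q n * Gp q i)) m"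
    unfolding f Eop_mult_lin coeff_add coeff_Bop coeff_smult by simp
  have IH: "\<And>m. coeff (Eop q (Fp q n * Gp q i)) m = (if n \<le> m then cf q n i (m - n) else 0)"
    using Suc by simp
  show ?case
  proof (cases "n \<le> m")
    case False
    then show ?thesis unfolding e IH by (auto split: nat.split)
  next
    case True
    then obtain j where mj: "m = n + j" using le_Suc_ex by blast
    have st: "cf q n (Suc i) j = (case j of 0 \<Rightarrow> 0 | Suc j' \<Rightarrow> cf q n i j') + (q ^ (n + j) + q ^ i) * cf q n i j"
      using cf_step[OF q, of i n j] Suc.prems by simp
    have "coeff (Eop q (Fp q n * Gp q (Suc i))) m =
     (case m of 0 \<Rightarrow> 0 | Suc k \<Rightarrow> (if n \<le> k then cf q n i (k - n) else 0)) + q ^ m * cf q n i j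
     + q ^ i * cf q n i j"
      unfolding e IH using mj by simp
    also have "\<dots> = cf q n (Suc i) j"
      unfolding st mj by (cases j; cases "n + j") (auto simp: algebra_simps split: nat.split)
    finally show ?thesis using mj by simp
  qed
qed
unbundle fps_syntax

lemma qexp_nth: "qexp q $ k = 1 / qfact q k" by (simp add: qexp_def)
lemma qexp_neg_nth: "qexp_neg q $ k = (-1) ^ k / qfact q k" by (simp add: qexp_neg_def)

definition "Dq q = qexp q + qexp_neg q"
definition "Nq q = qexp q - qexp_neg q"

lemma D_nth: "Dq q $ k = (if even k then 2 / qfact q k else 0)"
  by (simp add: Dq_def qexp_nth qexp_neg_nth add_divide_distrib[symmetric])

lemma N_nth: "Nq q $ k = (if even k then 0 else 2 / qfact q k)"
  by (simp add: Nq_def qexp_nth qexp_neg_nth diff_divide_distrib[symmetric])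

lemma D0: "Dq q $ 0 \<noteq> 0" by (simp add: D_nth)

lemma G_eq: "qgen_series q = fps_X * Nq q * inverse (Dq q)"
  unfolding qgen_series_def Dq_def[symmetric] Nq_def[symmetric] by (rule fps_divide_unit[OF D0])

lemma GD: "qgen_series q * Dq q = fps_X * Nq q"
  unfolding G_eq mult.assoc inverse_mult_eq_1[OF D0] by simp

lemma GD_nth: "(\<Sum>i=0..m. qgen_series q $ i * Dq q $ (m - i)) = (if m = 0 then 0 else Nq q $ (m - 1))"
proof -
  have "(qgen_series q * Dq q) $ m = (fps_X * Nq q) $ m" by (simp only: GD)
  then show ?thesis unfolding fps_X_mult_nth unfolding fps_mult_nth .
qed

lemma even_diff_iff: "i \<le> (m::nat) \<Longrightarrow> even (m - i) \<longleftrightarrow> (even m \<longleftrightarrow> even i)"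
  by (metis le_add_diff_inverse even_add)

lemma G_odd: "odd m \<Longrightarrow> qgen_series q $ m = 0"
proof -
  define G where "G = qgen_series q"
  define G' where "G' = Abs_fps (\<lambda>m. if even m then G $ m else 0)"
  have "G' * Dq q = fps_X * Nq q"
  proof (rule fps_ext)
    fix m
    show "(G' * Dq q) $ m = (fps_X * Nq q) $ m"
    proof (cases "even m")
      case True
      have "(G' * Dq q) $ m = (\<Sum>i=0..m. G $ i * Dq q $ (m - i))"
        unfolding fps_mult_nth
      proof (rule sum.cong)
        fix i assume "i \<in> {0..m}"
        then have "even (m - i) \<longleftrightarrow> even i" using even_diff_iff[of i m] True by simp
        then show "G' $ i * Dq q $ (m - i) = G $ i * Dq q $ (m - i)"
          by (simp add: G'_def D_nth)
      qed simp
      also have "\<dots> = (fps_X * Nq q) $ m" using GD_nth[of q m] by (simp add: G_def fps_X_mult_nth)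
      finally show ?thesis .
    next
      case False
      have "(G' * Dq q) $ m = (\<Sum>i=0..m. 0)"
        unfolding fps_mult_nth
      proof (rule sum.cong)
        fix i assume "i \<in> {0..m}"
        then have "even (m - i) \<longleftrightarrow> odd i" using even_diff_iff[of i m] False by simp
        then show "G' $ i * Dq q $ (m - i) = 0"
          by (simp add: G'_def D_nth)
      qed simp
      also have "\<dots> = (fps_X * Nq q) $ m" using False by (simp add: fps_X_mult_nth N_nth)
      finally show ?thesis .
    qed
  qed
  then have "G' * Dq q * inverse (Dq q) = fps_X * Nq q * inverse (Dq q)"
    by (rule arg_cong[where f="\<lambda>x. x * inverse (Dq q)"])
  then have "G' = fps_X * Nq q * inverse (Dq q)" unfolding mult.assoc inverse_mult_eq_1'[OF D0] by simp
  then have "G' = G" unfolding G_def G_eq .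
  assume "odd m"
  then have "G' $ m = 0" unfolding G'_def by simp
  then show ?thesis using \<open>G' = G\<close> unfolding G_def by simp
qed

lemma G_0: "qgen_series q $ 0 = 0"
  unfolding G_eq mult.assoc fps_X_mult_nth by simp

definition uu :: "real \<Rightarrow> nat \<Rightarrow> real" where
  "uu q l = qgen_series q $ l * qfact q l"

lemma factA:
  assumes q: "q \<noteq> -1" and "even m"
  shows "(\<Sum>l\<le>m. Qb q m l * uu q l) = qint q m"
proof (cases "m = 0")
  case True then show ?thesis using q by (simp add: uu_def G_0)
next
  case False
  define G where "G = qgen_series q"
  have "(\<Sum>l\<le>m. Qb q m l * uu q l) = (\<Sum>l=0..m. qfact q m * (G $ l * (Dq q $ (m - l) + Nq q $ (m - l)) / 2))"
    unfolding atMost_atLeast0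
  proof (rule sum.cong)
    fix l assume "l \<in> {0..m}"
    then have lm: "l \<le> m" by simp
    have "Dq q $ (m - l) + Nq q $ (m - l) = 2 / qfact q (m - l)" by (simp add: D_nth N_nth)
    then show "Qb q m l * uu q l = qfact q m * (G $ l * (Dq q $ (m - l) + Nq q $ (m - l)) / 2)"
      using lm qfact_nz[OF q, of l] by (simp add: Qb_def qbinom_def uu_def G_def)
  qed simp
  also have "\<dots> = qfact q m / 2 * ((\<Sum>l=0..m. G $ l * Dq q $ (m - l)) + (\<Sum>l=0..m. G $ l * Nq q $ (m - l)))"
    by (simp add: sum_distrib_left sum.distrib[symmetric] algebra_simps add_divide_distrib)
  also have "(\<Sum>l=0..m. G $ l * Nq q $ (m - l)) = 0"
  proof (rule sum.neutral, intro ballI)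
    fix l assume "l \<in> {0..m}"
    then have "even (m - l) \<longleftrightarrow> even l" using even_diff_iff[of l m] assms(2) by simp
    then show "G $ l * Nq q $ (m - l) = 0" by (cases "even l") (simp_all add: N_nth G_def G_odd)
  qed
  also have "(\<Sum>l=0..m. G $ l * Dq q $ (m - l)) = 2 / qfact q (m - 1)"
    using GD_nth[of q m] False assms(2) by (simp add: G_def N_nth)
  also have "qfact q m = qfact q (m - 1) * qint q m"
    using False qfact_Suc[of q "m - 1"] by simp
  finally show ?thesis using qfact_nz[OF q, of "m - 1"] by simp
qed

definition Lf :: "real \<Rightarrow> real poly \<Rightarrow> real" where
  "Lf q p = (\<Sum>m\<le>degree p. coeff p m * uu q m)"

lemma Lf_bound: "degree p \<le> N \<Longrightarrow> Lf q p = (\<Sum>m\<le>N. coeff p m * uu q m)"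
  unfolding Lf_def by (rule sum_coeff_bound[symmetric]) auto

lemma Lf_add: "Lf q (f + g) = Lf q f + Lf q g"
proof -
  define N where "N = max (degree f) (degree g)"
  have "degree (f + g) \<le> N" "degree f \<le> N" "degree g \<le> N"
    unfolding N_def by (auto intro: degree_add_le)
  then show ?thesis
    by (simp add: Lf_bound[of _ N] sum.distrib algebra_simps)
qed

lemma Lf_smult: "Lf q (smult c f) = c * Lf q f"
proof -
  have "degree (smult c f) \<le> degree f" by simp
  then show ?thesis
    by (simp add: Lf_bound[of _ "degree f"] sum_distrib_left Lf_def algebra_simps)
qed

lemma Lf_0 [simp]: "Lf q 0 = 0" by (simp add: Lf_def)

lemma Lf_sum: "finite A \<Longrightarrow> Lf q (\<Sum>i\<in>A. f i) = (\<Sum>i\<in>A. Lf q (f i))"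
  by (induction A rule: finite_induct) (simp_all add: Lf_add)

lemma degree_Bpow: "q \<noteq> -1 \<Longrightarrow> degree ((Bop q ^^ i) 1) \<le> i"
  by (rule degree_le) (simp add: coeff_Bpow)

lemma Lf_Bpow_even:
  assumes "q \<noteq> -1" "even i" shows "Lf q ((Bop q ^^ i) 1) = qint q i"
proof -
  have "Lf q ((Bop q ^^ i) 1) = (\<Sum>m\<le>i. coeff ((Bop q ^^ i) 1) m * uu q m)"
    by (rule Lf_bound[OF degree_Bpow[OF assms(1)]])
  also have "\<dots> = (\<Sum>m\<le>i. Qb q i m * uu q m)" by (simp add: coeff_Bpow assms(1))
  also have "\<dots> = qint q i" by (rule factA[OF assms])
  finally show ?thesis .
qed

definition Lam :: "real \<Rightarrow> real poly \<Rightarrow> real" where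
  "Lam q f = (\<Sum>i\<le>degree f. coeff f i * qint q i)"

definition evenp :: "real poly \<Rightarrow> bool" where
  "evenp f \<longleftrightarrow> (\<forall>i. odd i \<longrightarrow> coeff f i = 0)"

lemma Lf_Eop_even:
  assumes q: "q \<noteq> -1" and "evenp f"
  shows "Lf q (Eop q f) = Lam q f"
  unfolding Eop_def Lam_def Lf_sum[OF finite_atMost] Lf_smult
proof (rule sum.cong)
  fix i assume "i \<in> {..degree f}"
  show "coeff f i * Lf q ((Bop q ^^ i) 1) = coeff f i * qint q i"
  proof (cases "even i")
    case True then show ?thesis using Lf_Bpow_even[OF q True] by simp
  next
    case False then show ?thesis using assms(2) by (simp add: evenp_def)
  qed
qed simp

lemma Lam_bound: "degree p \<le> N \<Longrightarrow> Lam q p = (\<Sum>m\<le>N. coeff p m * qint q m)"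
  unfolding Lam_def by (rule sum_coeff_bound[symmetric]) auto

lemma Lam_add: "Lam q (f + g) = Lam q f + Lam q g"
proof -
  define N where "N = max (degree f) (degree g)"
  have "degree (f + g) \<le> N" "degree f \<le> N" "degree g \<le> N"
    unfolding N_def by (auto intro: degree_add_le)
  then show ?thesis
    by (simp add: Lam_bound[of _ N] sum.distrib algebra_simps)
qed

lemma Lam_smult: "Lam q (smult c f) = c * Lam q f"
proof -
  have "degree (smult c f) \<le> degree f" by simp
  then show ?thesis
    by (simp add: Lam_bound[of _ "degree f"] sum_distrib_left Lam_def algebra_simps)
qed

lemma Lam_shift2: "Lam q (pCons 0 (pCons 0 f)) = (1 + q) * poly f 1 + q^2 * Lam q f"
proof -
  have "degree (pCons 0 (pCons 0 f)) \<le> Suc (Suc (degree f))"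
    by (meson degree_pCons_le le_trans Suc_le_mono)
  then have "Lam q (pCons 0 (pCons 0 f)) = (\<Sum>m\<le>Suc (Suc (degree f)). coeff (pCons 0 (pCons 0 f)) m * qint q m)"
    by (rule Lam_bound)
  also have "\<dots> = (\<Sum>m\<le>degree f. coeff f m * qint q (Suc (Suc m)))"
    by (subst sum.atMost_Suc_shift, subst sum.atMost_Suc_shift) simp
  also have "\<dots> = (\<Sum>m\<le>degree f. coeff f m * (1 + q + q^2 * qint q m))"
  proof (rule sum.cong)
    fix m
    have "qint q (Suc (Suc m)) = qint q 2 + q^2 * qint q m" using qint_split[of 2 "Suc (Suc m)" q] by simp
    then show "coeff f m * qint q (Suc (Suc m)) = coeff f m * (1 + q + q^2 * qint q m)"
      by (simp add: qint_def numeral_2_eq_2)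
  qed simp
  also have "\<dots> = (1 + q) * poly f 1 + q^2 * Lam q f"
    by (simp add: poly_altdef Lam_def sum_distrib_left sum.distrib algebra_simps)
  finally show ?thesis .
qed

lemma Lam_mult_quad: "Lam q (f * [:-c, 0, 1:]) = (q^2 - c) * Lam q f + (1 + q) * poly f 1"
proof -
  have "f * [:-c, 0, 1:] = smult (-c) f + pCons 0 (pCons 0 f)"
    by (simp add: mult_pCons_right one_pCons[symmetric])
  then show ?thesis by (simp only: Lam_add Lam_smult Lam_shift2) (simp add: algebra_simps)
qed

definition Qn :: "real \<Rightarrow> nat \<Rightarrow> real poly" where
  "Qn q n = (\<Prod>k<n. [:-(q ^ (2 * k)), 0, 1:])"

lemma Qn_Suc: "Qn q (Suc n) = Qn q n * [:-(q ^ (2 * n)), 0, 1:]"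
  by (simp add: Qn_def)

lemma Qn_FG: "Qn q n = Fp q n * Gp q n"
proof -
  have h: "\<And>k. k \<in> {..<n} \<Longrightarrow> [:-(q ^ (2 * k)), 0, 1:] = [:-(q ^ k), 1:] * [:q ^ k, 1:]"
    by (simp add: power_mult power2_eq_square mult_ac)
  show ?thesis unfolding Qn_def Fp_def Gp_def prod.distrib[symmetric] by (rule prod.cong[OF refl h])
qed

lemma evenp_Qn: "evenp (Qn q n)"
proof (induction n)
  case 0 then show ?case by (simp add: Qn_def evenp_def coeff_1 odd_pos)
next
  case (Suc n)
  have e: "Qn q n * [:-(q ^ (2 * n)), 0, 1:] = smult (-(q ^ (2 * n))) (Qn q n) + pCons 0 (pCons 0 (Qn q n))"
    by (simp add: mult_pCons_right one_pCons[symmetric])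
  show ?case unfolding Qn_Suc e evenp_def
  proof (intro allI impI)
    fix i :: nat assume "odd i"
    then show "coeff (smult (- (q ^ (2 * n))) (Qn q n) + pCons 0 (pCons 0 (Qn q n))) i = 0"
      using Suc.IH unfolding evenp_def
      by (cases i; cases "i - 1") (auto simp: coeff_pCons)
  qed
qed

lemma poly_Qn_1: "n \<ge> 1 \<Longrightarrow> poly (Qn q n) 1 = 0"
  unfolding Qn_def poly_prod by (rule prod_zero) (auto intro!: bexI[of _ 0])

lemma Lam_Qn: "Lam q (Qn q n) = (if n = 1 then 1 + q else 0)"
proof (induction n)
  case 0 then show ?case by (simp add: Qn_def Lam_def)
next
  case (Suc n)
  show ?case
  proof (cases n)
    case 0 then show ?thesis
      using Lam_mult_quad[of q 1 1] by (simp add: Qn_def Lam_def)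
  next
    case (Suc m)
    then show ?thesis unfolding Qn_Suc Lam_mult_quad using Suc.IH poly_Qn_1[of n q]
      by (cases m) (auto simp: power_mult)
  qed
qed

theorem seidel_core:
  assumes q: "q \<noteq> -1"
  shows "Lf q (Eop q (Fp q n * Gp q n)) = (if n = 1 then 1 + q else 0)"
  using Lf_Eop_even[OF q evenp_Qn, of q n] Lam_Qn[of q n] by (simp add: Qn_FG)

lemma one_plus_pow_nz: assumes "q \<noteq> -1" shows "1 + q ^ e \<noteq> (0::real)"
proof
  assume h: "1 + q ^ e = 0"
  then have "q ^ e = -1" by simp
  then have "\<bar>q\<bar> ^ e = 1" by (metis power_abs abs_neg_one)
  moreover have "e \<noteq> 0" using h by (cases e) auto
  ultimately have "\<bar>q\<bar> = 1"
    by (metis abs_ge_zero power_eq_imp_eq_base power_one zero_le_one not_gr0)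
  then have "q = 1 \<or> q = -1" by (auto simp: abs_if split: if_splits)
  then show False using h assms by auto
qed

lemma qpoch_neg_pow: "qpoch (-(q ^ a)) q m = (\<Prod>i<m. 1 + q ^ (a + i))"
  unfolding qpoch_def by (simp add: power_add)

lemma qpoch_neg_pow_nz: "q \<noteq> -1 \<Longrightarrow> qpoch (-(q ^ a)) q m \<noteq> 0"
  unfolding qpoch_neg_pow using one_plus_pow_nz by (simp add: prod_zero_iff)

lemma qpoch_add: "qpoch a q (m + r) = qpoch a q m * qpoch (a * q ^ m) q r"
  by (induction r) (simp_all add: qpoch_def power_add mult_ac)

lemma sum_split_shift: fixes n k :: nat shows "(\<Sum>m\<le>n + k. g m) = (\<Sum>m<n. g m) + (\<Sum>j\<le>k. (g (n + j) :: real))"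
proof (induction k)
  case 0 then show ?case by (simp add: lessThan_Suc_atMost[symmetric])
next
  case (Suc k) then show ?case by simp
qed

lemma sum_even_reindex:
  fixes n :: nat
  assumes "\<And>j. j \<le> n \<Longrightarrow> odd (n - j) \<Longrightarrow> h j = (0::real)"
  shows "(\<Sum>j\<le>n. h j) = (\<Sum>k=0..n div 2. h (n - 2 * k))"
proof -
  have "(\<Sum>j\<le>n. h j) = (\<Sum>j\<in>{j. j \<le> n \<and> even (n - j)}. h j)"
    by (rule sum.mono_neutral_right) (use assms in auto)
  also have "\<dots> = (\<Sum>k=0..n div 2. h (n - 2 * k))"
  proof (rule sum.reindex_bij_witness[where j="\<lambda>j. (n - j) div 2" and i="\<lambda>k. n - 2 * k"])
    fix a assume a: "a \<in> {j. j \<le> n \<and> even (n - j)}"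
    then show *: "n - 2 * ((n - a) div 2) = a" by (auto elim!: evenE)
    from a show "(n - a) div 2 \<in> {0..n div 2}" by (auto intro: div_le_mono)
    from * show "h (n - 2 * ((n - a) div 2)) = h a" by simp
  next
    fix b assume "b \<in> {0..n div 2}"
    then show "(n - (n - 2 * b)) div 2 = b" "n - 2 * b \<in> {j. j \<le> n \<and> even (n - j)}"
      by auto
  qed
  finally show ?thesis .
qed

lemma Lf_P_sum:
  assumes q: "q \<noteq> -1"
  shows "Lf q (Eop q (Fp q n * Gp q n)) = (\<Sum>k=0..n div 2. cf q n n (n - 2 * k) * uu q (2 * (n - k)))"
proof -
  define P where "P = Eop q (Fp q n * Gp q n)"
  have cP: "\<And>m. coeff P m = (if n \<le> m then cf q n n (m - n) else 0)"
    unfolding P_def by (rule coeff_Eop_FG[OF q]) simp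
  have "degree P \<le> n + n"
    by (rule degree_le) (simp add: cP cf_def)
  then have "Lf q P = (\<Sum>m\<le>n + n. coeff P m * uu q m)" by (rule Lf_bound)
  also have "\<dots> = (\<Sum>j\<le>n. cf q n n j * uu q (n + j))"
    unfolding sum_split_shift by (simp add: cP)
  also have "\<dots> = (\<Sum>k=0..n div 2. cf q n n (n - 2 * k) * uu q (n + (n - 2 * k)))"
  proof (rule sum_even_reindex)
    fix j assume "j \<le> n" "odd (n - j)"
    then have "odd (n + j)" using even_diff_iff[of j n] by simp
    then show "cf q n n j * uu q (n + j) = 0" by (simp add: uu_def G_odd)
  qed
  also have "\<dots> = (\<Sum>k=0..n div 2. cf q n n (n - 2 * k) * uu q (2 * (n - k)))"
  proof (rule sum.cong)
    fix k assume "k \<in> {0..n div 2}"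
    then have "n + (n - 2 * k) = 2 * (n - k)" by auto
    then show "cf q n n (n - 2 * k) * uu q (n + (n - 2 * k)) = cf q n n (n - 2 * k) * uu q (2 * (n - k))" by simp
  qed simp
  finally show ?thesis unfolding P_def .
qed

lemma term_eq:
  assumes q: "q \<noteq> -1" and n: "n \<ge> 1" and k: "k \<le> n div 2"
  shows "q ^ ((2 * k) choose 2) * qbinom q n (2 * k) * (-1) ^ k
            * qpoch (- (q ^ (n - 2 * k + 1))) q (2 * k)
            / qpoch (- (q ^ (2 * n - 2 * k))) q (2 * k)
            * qGenocchi q (n - k)
       = (-1) ^ (n - 1) / qpoch (- q) q (2 * n - 1) * (cf q n n (n - 2 * k) * uu q (2 * (n - k)))"
proof -
  have k2: "2 * k \<le> n" using k by linarith
  have kn: "k < n" using k n by linarith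
  have cfe: "cf q n n (n - 2 * k) = qbinom q n (2 * k) * q ^ ((2 * k) choose 2) * qpoch (- (q ^ (n - 2 * k + 1))) q (2 * k)"
  proof -
    have a: "n - (n - 2 * k) = 2 * k" using k2 by simp
    have b: "Qb q n (n - 2 * k) = qbinom q n (2 * k)"
        unfolding Qb_def qbinom_def using k2 by (simp add: a mult_ac)
    have c: "PP q n (2 * k) = qpoch (- (q ^ (n - 2 * k + 1))) q (2 * k)"
      unfolding PP_def qpoch_neg_pow using k2 by (intro prod.cong) (auto simp: Suc_diff_le)
    show ?thesis unfolding cf_def a b c by simp
  qed
  have gen: "qGenocchi q (n - k) = uu q (2 * (n - k)) * (-1) ^ (n - k - 1) / qpoch (- q) q (2 * (n - k) - 1)"
    unfolding qGenocchi_def uu_def by simp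
  define R where "R = qpoch (- (q ^ (2 * n - 2 * k))) q (2 * k)"
  define S where "S = qpoch (- q) q (2 * (n - k) - 1)"
  have RS: "qpoch (- q) q (2 * n - 1) = S * R"
  proof -
    have "2 * n - 1 = (2 * (n - k) - 1) + 2 * k" using kn by simp
    moreover have "- q * q ^ (2 * (n - k) - 1) = - (q ^ (2 * n - 2 * k))"
    proof -
      have "Suc (2 * (n - k) - 1) = 2 * n - 2 * k" using kn by simp
      then have "q * q ^ (2 * (n - k) - 1) = q ^ (2 * n - 2 * k)" by (metis power_Suc)
      then show ?thesis by simp
    qed
    ultimately show ?thesis unfolding S_def R_def by (simp add: qpoch_add)
  qed
  have Rnz: "R \<noteq> 0" unfolding R_def by (rule qpoch_neg_pow_nz[OF q])
  have Snz: "S \<noteq> 0" unfolding S_def using qpoch_neg_pow_nz[OF q, of 1 "2 * (n - k) - 1"] by simp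
  have sg: "(-1::real) ^ k * (-1) ^ (n - k - 1) = (-1) ^ (n - 1)"
  proof -
    have "k + (n - k - 1) = n - 1" using kn by simp
    then show ?thesis by (metis power_add)
  qed
  have alg: "\<And>a b s1 s2 P U R S :: real. R \<noteq> 0 \<Longrightarrow> S \<noteq> 0 \<Longrightarrow>
      a * b * s1 * P / R * (U * s2 / S) = (s1 * s2) / (S * R) * (b * a * P * U)"
    by (simp add: field_simps)
  show ?thesis
    unfolding gen cfe RS R_def[symmetric] S_def[symmetric] sg[symmetric]
    by (rule alg[OF Rnz Snz])
qed

theorem theorem3p5:
  fixes q :: real and n :: nat
  assumes "q \<noteq> -1" and "n \<ge> 1"
  shows "(\<Sum>k = 0..n div 2.
            q ^ ((2 * k) choose 2) * qbinom q n (2 * k) * (-1) ^ k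
            * qpoch (- (q ^ (n - 2 * k + 1))) q (2 * k)
            / qpoch (- (q ^ (2 * n - 2 * k))) q (2 * k)
            * qGenocchi q (n - k))
         = (if n = 1 then 1 else 0)"
proof -
  have "(\<Sum>k = 0..n div 2.
            q ^ ((2 * k) choose 2) * qbinom q n (2 * k) * (-1) ^ k
            * qpoch (- (q ^ (n - 2 * k + 1))) q (2 * k)
            / qpoch (- (q ^ (2 * n - 2 * k))) q (2 * k)
            * qGenocchi q (n - k))
      = (\<Sum>k = 0..n div 2. (-1) ^ (n - 1) / qpoch (- q) q (2 * n - 1) * (cf q n n (n - 2 * k) * uu q (2 * (n - k))))"
    by (rule sum.cong) (use term_eq[OF assms] in auto)
  also have "\<dots> = (-1) ^ (n - 1) / qpoch (- q) q (2 * n - 1) * Lf q (Eop q (Fp q n * Gp q n))"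
    by (simp add: Lf_P_sum[OF assms(1)] sum_distrib_left)
  also have "\<dots> = (if n = 1 then 1 else 0)"
  proof (cases "n = 1")
    case True
    have "qpoch (- q) q 1 = 1 + q" by (simp add: qpoch_def)
    then show ?thesis using True seidel_core[OF assms(1), of n] one_plus_pow_nz[OF assms(1), of 1] by simp
  next
    case False
    then show ?thesis using seidel_core[OF assms(1), of n] by simp
  qed
  finally show ?thesis .
qed

end
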